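(* Suppose a first-order method in Algorithm Class 1 is applied to instance $\mathcal P$ from $x^{(0)}=0$ and generates a sequence $\{x^{(t)}\}_{t\ge0}$, with $x^{(t)}=(x_1^{(t)\top},\dots,x_m^{(t)\top})^\top$, $x_i^{(t)}\in\mathbb R^{\bar d}$. Then for any $\bar j\in\{2,3,\dots,\bar d\}$, $\mathrm{supp}(x_i^{(t)})\subset\{1,\dots,\bar j-1\}$ for all $i=1,\dots,m$ and all integers $0\le t\le 1+m(\bar j-2)/6$.
   Context: $\mathrm{supp}(z)=\{j:[z]_j\ne0\}$. Algorithm Class 1 (for problem $\min f_0(x)+g(x)$ s.t. $Ax+b=0$): given $x^{(0)}$, for every $t\ge1$, $x^{(t)}\in\mathrm{span}\{\xi^{(t)},\mathrm{prox}_{\eta_tg}(\xi^{(t)})\}$ for some $\eta_t>0$ and some $\xi^{(t)}\in\mathrm{span}\{x^{(s)},\nabla f_0(x^{(s)}),A^\top b,A^\top Ax^{(s)}\}_{s=0}^{t-1}$, where $\mathrm{prox}_{\eta g}(x)=\arg\min_{x'}\{g(x')+\frac1{2\eta}\|x'-x\|^2\}$. Instance $\mathcal P$: fix $\epsilon\in(0,1)$, $L_f>0$, integers $m_1\ge2$, $m_2\ge1$ with $m_1m_2$ even, $m=3m_1m_2$, an odd integer $\bar d\ge5$, $d=m\bar d$. Write $x=(x_1^\top,\dots,x_m^\top)^\top$, $x_i\in\mathbb R^{\bar d}$; $[z]_j$ is the $j$-th coordinate. $J_p\in\mathbb R^{(p-1)\times p}$ has $-1$ at $(k,k)$, $1$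 at $(k,k+1)$, zero elsewhere. $\mathcal M=\{im_1:i=1,\dots,3m_2-1\}$, $\mathcal M^C=\{1,\dots,m-1\}\setminus\mathcal M$, $\bar A=mL_f(J_{\mathcal M}\otimes I_{\bar d})$, $A=mL_f(J_{\mathcal M^C}\otimes I_{\bar d})$ with $J_{\mathcal M},J_{\mathcal M^C}$ the rows of $J_m$ indexed by $\mathcal M,\mathcal M^C$; $b=0$. Choose $\beta>(50\pi+1+\|A\|)\sqrt m\,\epsilon$; $g(x)=\beta\sum_{i\in\mathcal M}\|x_i-x_{i+1}\|_1$. $\Psi(u)=0$ ($u\le0$), $1-e^{-u^2}$ ($u>0$); $\Phi(v)=4\arctan v+2\pi$. For $z\in\mathbb R^{\bar d}$: $\varphi(z,1)=-\Psi(1)\Phi([z]_1)$, $\varphi(z,j)=\Psi(-[z]_{j-1})\Phi(-[z]_j)-\Psi([z]_{j-1})\Phi([z]_j)$ ($2\le j\le\bar d$); $h_i(z)=\varphi(z,1)+3\sum_{j=1}^{\lfloor\bar d/2\rfloor}\varphi(z,2j)$ for $1\le i\le m/3$, $h_i(z)=\varphi(z,1)$ for $m/3+1\le i\le 2m/3$, $h_i(z)=\varphi(z,1)+3\sum_{j=1}^{\lfloor\bar d/2\rfloor}\varphi(z,2j+1)$ for $2m/3+1\le i\le m$. $f_i(z)=\frac{300\pi\epsilon^2}{mL_f}h_i(\frac{\sqrt mL_fz}{150\pi\epsilon})$, $f_0(x)=\sum_{i=1}^mf_i(x_i)$. Instance $\mathcal P$ is $\min_x f_0(x)+g(x)$ s.t.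 $Ax+b=0$. *)

theory Defs
  imports "HOL-Analysis.Analysis"
begin

text \<open>Vectors of R^d are represented as functions nat => real, coordinates 0..d-1
  (0-based internally), vanishing outside {..<d}.  The i-th block (i = 1..m) of x,
  as a vector of R^dbar with 1-based coordinates j = 1..dbar, is blk dbar x i.\<close>

definition vecsp :: "nat \<Rightarrow> (nat \<Rightarrow> real) set" where
  "vecsp d = {x. \<forall>k\<ge>d. x k = 0}"

definition vnorm :: "nat \<Rightarrow> (nat \<Rightarrow> real) \<Rightarrow> real" where
  "vnorm d x = sqrt (\<Sum>k<d. (x k)^2)"

definition blk :: "nat \<Rightarrow> (nat \<Rightarrow> real) \<Rightarrow> nat \<Rightarrow> nat \<Rightarrow> real" where
  "blk dbar x i = (\<lambda>j. x ((i - 1) * dbar + (j - 1)))"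

definition supp :: "nat \<Rightarrow> (nat \<Rightarrow> real) \<Rightarrow> nat set" where
  "supp n z = {j \<in> {1..n}. z j \<noteq> 0}"

definition in_span :: "(nat \<Rightarrow> real) \<Rightarrow> (nat \<Rightarrow> real) set \<Rightarrow> bool" where
  "in_span x S \<longleftrightarrow> (\<exists>c. x = (\<lambda>k. \<Sum>v\<in>S. c v * v k))"

definition grad :: "nat \<Rightarrow> ((nat \<Rightarrow> real) \<Rightarrow> real) \<Rightarrow> (nat \<Rightarrow> real) \<Rightarrow> (nat \<Rightarrow> real)" where
  "grad d f x = (\<lambda>k. if k < d then deriv (\<lambda>s. f (x(k := s))) (x k) else 0)"

definition is_prox :: "nat \<Rightarrow> real \<Rightarrow> ((nat \<Rightarrow> real) \<Rightarrow> real) \<Rightarrow> (nat \<Rightarrow> real) \<Rightarrow> (nat \<Rightarrow> real) \<Rightarrow> bool" where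
  "is_prox d eta g x p \<longleftrightarrow> p \<in> vecsp d \<and>
     (\<forall>y\<in>vecsp d. g p + (vnorm d (\<lambda>k. p k - x k))^2 / (2*eta)
                  \<le> g y + (vnorm d (\<lambda>k. y k - x k))^2 / (2*eta))"

definition Psi :: "real \<Rightarrow> real" where
  "Psi u = (if u \<le> 0 then 0 else 1 - exp (- (u^2)))"

definition Phi :: "real \<Rightarrow> real" where
  "Phi v = 4 * arctan v + 2 * pi"

definition varphi :: "(nat \<Rightarrow> real) \<Rightarrow> nat \<Rightarrow> real" where
  "varphi z j = (if j = 1 then - Psi 1 * Phi (z 1)
                 else Psi (- z (j - 1)) * Phi (- z j) - Psi (z (j - 1)) * Phi (z j))"

definition hfun :: "nat \<Rightarrow> nat \<Rightarrow> nat \<Rightarrow> (nat \<Rightarrow> real) \<Rightarrow> real" where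
  "hfun m dbar i z =
    (if 1 \<le> i \<and> i \<le> m div 3 then varphi z 1 + 3 * (\<Sum>j=1..dbar div 2. varphi z (2*j))
     else if m div 3 + 1 \<le> i \<and> i \<le> 2 * m div 3 then varphi z 1
     else varphi z 1 + 3 * (\<Sum>j=1..dbar div 2. varphi z (2*j+1)))"

definition ffun :: "real \<Rightarrow> real \<Rightarrow> nat \<Rightarrow> nat \<Rightarrow> nat \<Rightarrow> (nat \<Rightarrow> real) \<Rightarrow> real" where
  "ffun eps Lf m dbar i z =
     300 * pi * eps^2 / (real m * Lf) *
       hfun m dbar i (\<lambda>j. sqrt (real m) * Lf * z j / (150 * pi * eps))"

definition f0 :: "real \<Rightarrow> real \<Rightarrow> nat \<Rightarrow> nat \<Rightarrow> (nat \<Rightarrow> real) \<Rightarrow> real" where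
  "f0 eps Lf m dbar x = (\<Sum>i=1..m. ffun eps Lf m dbar i (blk dbar x i))"

text \<open>Index sets M and M^C (rows of J_m, 1-based).\<close>
definition Mset :: "nat \<Rightarrow> nat \<Rightarrow> nat set" where
  "Mset m1 m2 = {i * m1 | i. 1 \<le> i \<and> i \<le> 3 * m2 - 1}"

definition MCset :: "nat \<Rightarrow> nat \<Rightarrow> nat set" where
  "MCset m1 m2 = {1..3*m1*m2 - 1} - Mset m1 m2"

text \<open>J_p: (p-1) x p, entry (k,l) 1-based.\<close>
definition Jmat :: "nat \<Rightarrow> nat \<Rightarrow> real" where
  "Jmat k l = (if l = k then -1 else if l = k + 1 then 1 else 0)"

text \<open>A = m Lf (J_{M^C} \<otimes> I_dbar).  Its output is indexed by (row r \<in> M^C, coordinate j).\<close>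
definition Aop :: "real \<Rightarrow> nat \<Rightarrow> nat \<Rightarrow> nat \<Rightarrow> (nat \<Rightarrow> real) \<Rightarrow> nat \<Rightarrow> nat \<Rightarrow> real" where
  "Aop Lf m1 m2 dbar x r j =
     (let m = 3*m1*m2 in
      if r \<in> MCset m1 m2 \<and> 1 \<le> j \<and> j \<le> dbar
      then real m * Lf * (\<Sum>l=1..m. Jmat r l * blk dbar x l j) else 0)"

definition Atop :: "real \<Rightarrow> nat \<Rightarrow> nat \<Rightarrow> nat \<Rightarrow> (nat \<Rightarrow> nat \<Rightarrow> real) \<Rightarrow> nat \<Rightarrow> real" where
  "Atop Lf m1 m2 dbar y k =
     (let m = 3*m1*m2 in
      if k < m * dbar
      then real m * Lf * (\<Sum>r\<in>MCset m1 m2. Jmat r (k div dbar + 1) * y r (k mod dbar + 1))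
      else 0)"

definition Anorm :: "real \<Rightarrow> nat \<Rightarrow> nat \<Rightarrow> nat \<Rightarrow> real" where
  "Anorm Lf m1 m2 dbar =
     Sup {sqrt (\<Sum>r\<in>MCset m1 m2. \<Sum>j=1..dbar. (Aop Lf m1 m2 dbar x r j)^2) | x.
            x \<in> vecsp (3*m1*m2*dbar) \<and> vnorm (3*m1*m2*dbar) x \<le> 1}"

definition gfun :: "real \<Rightarrow> nat \<Rightarrow> nat \<Rightarrow> nat \<Rightarrow> (nat \<Rightarrow> real) \<Rightarrow> real" where
  "gfun beta m1 m2 dbar x =
     beta * (\<Sum>i\<in>Mset m1 m2. \<Sum>j=1..dbar. \<bar>blk dbar x i j - blk dbar x (i+1) j\<bar>)"

end

theory Submission
  imports Defs
begin


lemma Psi_0[simp]: "Psi 0 = 0" by (simp add: Psi_def)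

lemma Psi_bound: "\<bar>Psi u\<bar> \<le> u^2"
proof (cases "u \<le> 0")
  case True then show ?thesis by (simp add: Psi_def)
next
  case False
  have "1 - u^2 \<le> exp (- (u^2))" using exp_ge_add_one_self[of "- (u^2)"] by simp
  moreover have "exp (- (u^2)) \<le> 1" by simp
  ultimately show ?thesis using False by (simp add: Psi_def)
qed

lemma Psi_deriv0: "(Psi has_real_derivative 0) (at 0)"
proof -
  have "((\<lambda>y. (Psi y - Psi 0) / (y - 0)) \<longlongrightarrow> 0) (at 0)"
  proof (rule Lim_null_comparison)
    show "\<forall>\<^sub>F y in at 0. norm ((Psi y - Psi 0) / (y - 0)) \<le> \<bar>y\<bar>"
    proof (rule always_eventually, intro allI)
      fix y :: real
      show "norm ((Psi y - Psi 0) / (y - 0)) \<le> \<bar>y\<bar>"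
      proof (cases "y = 0")
        case False
        have "\<bar>Psi y\<bar> \<le> \<bar>y\<bar> * \<bar>y\<bar>" using Psi_bound[of y] by (simp add: power2_eq_square abs_mult[symmetric])
        then show ?thesis using False by (simp add: divide_le_eq abs_divide)
      qed simp
    qed
    show "((\<lambda>y::real. \<bar>y\<bar>) \<longlongrightarrow> 0) (at 0)"
      using tendsto_rabs[OF tendsto_ident_at[of 0 UNIV]] by simp
  qed
  then show ?thesis unfolding has_field_derivative_iff .
qed

lemma Psi_neg_deriv0: "((\<lambda>u. Psi (- u)) has_real_derivative 0) (at 0)"
proof -
  have "((\<lambda>u. - u) has_real_derivative -1) (at (0::real))"
    using DERIV_minus[OF DERIV_ident] .
  from DERIV_chain2[OF _ this, of Psi 0] Psi_deriv0 show ?thesis by simp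
qed


lemma varphi_deriv0:
  assumes "2 \<le> l" "2 \<le> j" "w j = 0" "l = j \<Longrightarrow> w (j-1) = 0"
  shows "((\<lambda>u. varphi (w(j:=u)) l) has_real_derivative 0) (at 0)"
proof -
  have vl: "\<And>z. varphi z l = Psi (- z (l - 1)) * Phi (- z l) - Psi (z (l - 1)) * Phi (z l)"
    using assms(1) by (simp add: varphi_def)
  consider "l = j" | "l = j + 1" | "l \<noteq> j" "l - 1 \<noteq> j" by linarith
  then show ?thesis
  proof cases
    case 1
    then have "(\<lambda>u. varphi (w(j:=u)) l) = (\<lambda>u. 0)"
    proof -
      have "j - Suc 0 \<noteq> j" using assms(2) by simp
      then show ?thesis unfolding vl using assms 1 by simp
    qed
    then show ?thesis by simp
  next
    case 2
    then have e: "(\<lambda>u. varphi (w(j:=u)) l) = (\<lambda>u. Psi (- u) * Phi (- w l) - Psi u * Phi (w l))"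
      unfolding vl using 2 by simp
    show ?thesis unfolding e
      using DERIV_diff[OF DERIV_cmult_right[OF Psi_neg_deriv0] DERIV_cmult_right[OF Psi_deriv0]]
      by simp
  next
    case 3
    then have "(\<lambda>u. varphi (w(j:=u)) l) = (\<lambda>u. varphi w l)"
      unfolding vl using 3 by simp
    then show ?thesis by simp
  qed
qed


lemma varphi1_const: "2 \<le> j \<Longrightarrow> varphi (w(j:=u)) 1 = varphi w 1"
  by (simp add: varphi_def)

lemma varphi1_const': "2 \<le> j \<Longrightarrow> varphi (w(j:=u)) (Suc 0) = varphi w (Suc 0)"
  by (simp add: varphi_def)

lemma hfun_deriv0:
  assumes "1 \<le> i" "2 \<le> j" "w j = 0"
    "(i \<le> m div 3 \<and> even j) \<or> (2*m div 3 < i \<and> odd j) \<Longrightarrow> w (j-1) = 0"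
  shows "((\<lambda>u. hfun m dbar i (w(j:=u))) has_real_derivative 0) (at 0)"
proof -
  consider "i \<le> m div 3" | "\<not> i \<le> m div 3" "m div 3 + 1 \<le> i \<and> i \<le> 2 * m div 3"
    | "\<not> i \<le> m div 3" "\<not> (m div 3 + 1 \<le> i \<and> i \<le> 2 * m div 3)" by blast
  then show ?thesis
  proof cases
    case 1
    have s: "((\<lambda>u. \<Sum>l=1..dbar div 2. varphi (w(j:=u)) (2*l)) has_real_derivative (\<Sum>l=1..dbar div 2. 0)) (at 0)"
      apply (rule DERIV_sum)
      apply (rule varphi_deriv0)
      using assms 1 by auto
    have e: "(\<lambda>u. hfun m dbar i (w(j:=u))) = (\<lambda>u. varphi w 1 + 3 * (\<Sum>l=1..dbar div 2. varphi (w(j:=u)) (2*l)))"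
      using 1 assms(1,2) by (simp add: hfun_def varphi1_const varphi1_const')
    show ?thesis unfolding e using DERIV_add[OF DERIV_const DERIV_cmult[OF s, of 3]] by simp
  next
    case 2
    have e: "(\<lambda>u. hfun m dbar i (w(j:=u))) = (\<lambda>u. varphi w 1)"
      using 2 assms(1,2) by (simp add: hfun_def varphi1_const varphi1_const')
    show ?thesis unfolding e by simp
  next
    case 3
    have s: "((\<lambda>u. \<Sum>l=1..dbar div 2. varphi (w(j:=u)) (2*l+1)) has_real_derivative (\<Sum>l=1..dbar div 2. 0)) (at 0)"
      apply (rule DERIV_sum)
      apply (rule varphi_deriv0)
      using assms 3 by auto
    have e: "(\<lambda>u. hfun m dbar i (w(j:=u))) = (\<lambda>u. varphi w 1 + 3 * (\<Sum>l=1..dbar div 2. varphi (w(j:=u)) (2*l+1)))"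
      using 3 assms(1,2) by (simp add: hfun_def varphi1_const varphi1_const')
    show ?thesis unfolding e using DERIV_add[OF DERIV_const DERIV_cmult[OF s, of 3]] by simp
  qed
qed


lemma dm: "(b::nat) < d \<Longrightarrow> (a*d + b) div d = a \<and> (a*d+b) mod d = b"
  by simp

lemma idx_div: "1 \<le> (j::nat) \<Longrightarrow> j \<le> dbar \<Longrightarrow> ((i-1)*dbar + (j-1)) div dbar = i-1"
proof -
  assume "1 \<le> j" "j \<le> dbar"
  then have "j - 1 < dbar" by linarith
  from dm[OF this, of "i-1"] show ?thesis by blast
qed

lemma idx_mod: "1 \<le> (j::nat) \<Longrightarrow> j \<le> dbar \<Longrightarrow> ((i-1)*dbar + (j-1)) mod dbar = j-1"
proof -
  assume "1 \<le> j" "j \<le> dbar"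
  then have "j - 1 < dbar" by linarith
  from dm[OF this, of "i-1"] show ?thesis by blast
qed

lemma idx_inj:
  assumes "1 \<le> (i::nat)" "1 \<le> i'" "1 \<le> j" "j \<le> dbar" "1 \<le> j'" "j' \<le> dbar"
    "(i-1)*dbar + (j-1) = (i'-1)*dbar + (j'-1)"
  shows "i = i' \<and> j = j'"
proof -
  have "i - 1 = i' - 1" using idx_div[of j dbar i] idx_div[of j' dbar i'] assms by simp
  moreover have "j - 1 = j' - 1" using idx_mod[of j dbar i] idx_mod[of j' dbar i'] assms by simp
  ultimately show ?thesis using assms by arith
qed

lemma idx_lt: "1 \<le> (i::nat) \<Longrightarrow> i \<le> m \<Longrightarrow> 1 \<le> j \<Longrightarrow> j \<le> dbar \<Longrightarrow> (i-1)*dbar + (j-1) < m*dbar"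
proof -
  assume a: "1 \<le> i" "i \<le> m" "1 \<le> j" "j \<le> dbar"
  have "(i-1)*dbar + (j-1) < (i-1)*dbar + dbar" using a by linarith
  also have "\<dots> = i * dbar" using a by (cases i) auto
  also have "\<dots> \<le> m * dbar" using a by simp
  finally show ?thesis .
qed

lemma varphi_cong:
  assumes "1 \<le> l" "l \<le> dbar" "\<forall>j\<in>{1..dbar}. z j = z' j"
  shows "varphi z l = varphi z' l"
proof (cases "l = 1")
  case True then show ?thesis using assms by (auto simp: varphi_def)
next
  case False
  then have "l - 1 \<in> {1..dbar}" "l \<in> {1..dbar}" using assms by auto
  then have "z (l-1) = z' (l-1)" "z l = z' l" using assms(3) by blast+
  then show ?thesis using False by (simp add: varphi_def)
qed

lemma odd_bound: "odd (dbar::nat) \<Longrightarrow> l \<le> dbar div 2 \<Longrightarrow> 2*l+1 \<le> dbar"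
  using odd_two_times_div_two_succ[of dbar] by linarith

lemma hfun_cong:
  assumes "odd dbar" "\<forall>j\<in>{1..dbar}. z j = z' j"
  shows "hfun m dbar i z = hfun m dbar i z'"
proof -
  have a: "varphi z (2*l) = varphi z' (2*l)" if "l \<in> {1..dbar div 2}" for l
    using that assms by (intro varphi_cong) auto
  have b: "varphi z (2*l+1) = varphi z' (2*l+1)" if "l \<in> {1..dbar div 2}" for l
    using that assms odd_bound[of dbar l] by (intro varphi_cong) auto
  have "1 \<le> dbar" using assms(1) by (cases dbar) auto
  then have c: "varphi z 1 = varphi z' 1" using assms by (intro varphi_cong) auto
  have sa: "(\<Sum>l=1..dbar div 2. varphi z (2*l)) = (\<Sum>l=1..dbar div 2. varphi z' (2*l))"
    using a by (intro sum.cong) auto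
  have sb: "(\<Sum>l=1..dbar div 2. varphi z (2*l+1)) = (\<Sum>l=1..dbar div 2. varphi z' (2*l+1))"
    using b by (intro sum.cong) auto
  show ?thesis unfolding hfun_def sa sb c ..
qed

lemma ffun_cong:
  assumes "odd dbar" "\<forall>j\<in>{1..dbar}. z j = z' j"
  shows "ffun eps Lf m dbar i z = ffun eps Lf m dbar i z'"
  unfolding ffun_def using assms by (simp add: hfun_cong[OF assms(1)])


lemma grad_zero:
  assumes "1 \<le> i" "i \<le> m" "2 \<le> j" "j \<le> dbar" "odd dbar" "blk dbar x i j = 0"
    "(i \<le> m div 3 \<and> even j) \<or> (2*m div 3 < i \<and> odd j) \<Longrightarrow> blk dbar x i (j-1) = 0"
  shows "blk dbar (grad (m*dbar) (f0 eps Lf m dbar) x) i j = 0"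
proof -
  define k where "k = (i-1)*dbar + (j-1)"
  have klt: "k < m*dbar" unfolding k_def using idx_lt assms by simp
  have xk: "x k = 0" using assms(6) by (simp add: blk_def k_def)
  define c where "c = sqrt (real m) * Lf / (150*pi*eps)"
  define w where "w = (\<lambda>j'. sqrt (real m) * Lf * blk dbar x i j' / (150*pi*eps))"
  define C where "C = (\<Sum>i'\<in>{1..m}-{i}. ffun eps Lf m dbar i' (blk dbar x i'))"
  have blk_other: "blk dbar (x(k:=s)) i' j' = blk dbar x i' j'"
    if "i' \<in> {1..m} - {i}" "j' \<in> {1..dbar}" for i' j' s
  proof -
    have "(i'-1)*dbar + (j'-1) \<noteq> k"
      using idx_inj[of i i' j dbar j'] that assms unfolding k_def by auto
    then show ?thesis by (simp add: blk_def)
  qed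
  have blk_same: "blk dbar (x(k:=s)) i j' = ((blk dbar x i)(j:=s)) j'"
    if "j' \<in> {1..dbar}" for j' s
  proof (cases "j' = j")
    case True then show ?thesis by (simp add: blk_def k_def)
  next
    case False
    have "(i-1)*dbar + (j'-1) \<noteq> k"
      using idx_inj[of i i j dbar j'] that assms False unfolding k_def by auto
    then show ?thesis using False by (simp add: blk_def)
  qed
  have F: "f0 eps Lf m dbar (x(k:=s)) = C + ffun eps Lf m dbar i ((blk dbar x i)(j:=s))" for s
  proof -
    have "f0 eps Lf m dbar (x(k:=s)) = ffun eps Lf m dbar i (blk dbar (x(k:=s)) i)
        + (\<Sum>i'\<in>{1..m}-{i}. ffun eps Lf m dbar i' (blk dbar (x(k:=s)) i'))"
      unfolding f0_def using assms(1,2) by (simp add: sum.remove)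
    also have "(\<Sum>i'\<in>{1..m}-{i}. ffun eps Lf m dbar i' (blk dbar (x(k:=s)) i')) = C"
      unfolding C_def using blk_other assms(5) by (intro sum.cong refl ffun_cong) auto
    also have "ffun eps Lf m dbar i (blk dbar (x(k:=s)) i) = ffun eps Lf m dbar i ((blk dbar x i)(j:=s))"
      using blk_same assms(5) by (intro ffun_cong) auto
    finally show ?thesis by linarith
  qed
  have G: "ffun eps Lf m dbar i ((blk dbar x i)(j:=s)) = (300 * pi * eps^2 / (real m * Lf)) * hfun m dbar i (w(j := c * s))" for s
  proof -
    have "(\<lambda>j'. sqrt (real m) * Lf * ((blk dbar x i)(j:=s)) j' / (150*pi*eps)) = w(j := c * s)"
      by (rule ext) (simp add: w_def c_def)
    then show ?thesis unfolding ffun_def by simp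
  qed
  have wj: "w j = 0" using assms(6) by (simp add: w_def)
  have wj1: "(i \<le> m div 3 \<and> even j) \<or> (2*m div 3 < i \<and> odd j) \<Longrightarrow> w (j-1) = 0"
    using assms(7) by (simp add: w_def)
  have H: "((\<lambda>u. hfun m dbar i (w(j:=u))) has_real_derivative 0) (at (c*0))"
    using hfun_deriv0[OF assms(1,3) wj wj1] by simp
  have H2: "((\<lambda>s. hfun m dbar i (w(j:=c * s))) has_real_derivative 0 * c) (at 0)"
    using DERIV_chain2[OF H DERIV_cmult[OF DERIV_ident, of c]] by simp
  have D: "((\<lambda>s. f0 eps Lf m dbar (x(k:=s))) has_real_derivative 0) (at 0)"
    unfolding F G using DERIV_add[OF DERIV_const DERIV_cmult[OF H2, of "300 * pi * eps^2 / (real m * Lf)"]]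
    by simp
  have "blk dbar (grad (m*dbar) (f0 eps Lf m dbar) x) i j = grad (m*dbar) (f0 eps Lf m dbar) x k"
    by (simp add: blk_def k_def)
  also have "\<dots> = deriv (\<lambda>s. f0 eps Lf m dbar (x(k:=s))) 0"
    using klt xk by (simp add: grad_def)
  also have "\<dots> = 0" using DERIV_imp_deriv[OF D] .
  finally show ?thesis .
qed



lemma span_zero: "in_span x S \<Longrightarrow> (\<forall>v\<in>S. v k = 0) \<Longrightarrow> x k = 0"
  unfolding in_span_def by (auto intro: sum.neutral)

lemma Jmat_nz: "Jmat r l \<noteq> 0 \<Longrightarrow> l = r \<or> l = r + 1"
  by (auto simp: Jmat_def split: if_splits)

lemma MCset_range: "r \<in> MCset m1 m2 \<Longrightarrow> 1 \<le> r \<and> r + 1 \<le> 3*m1*m2"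
  by (auto simp: MCset_def)

lemma Aop_zero:
  assumes "r \<in> MCset m1 m2 \<Longrightarrow> blk dbar x r j = 0 \<and> blk dbar x (r+1) j = 0"
  shows "Aop Lf m1 m2 dbar x r j = 0"
proof (cases "r \<in> MCset m1 m2")
  case True
  have "(\<Sum>l=1..3*m1*m2. Jmat r l * blk dbar x l j) = 0"
  proof (rule sum.neutral, intro ballI)
    fix l assume "l \<in> {1..3*m1*m2}"
    show "Jmat r l * blk dbar x l j = 0"
      using Jmat_nz[of r l] assms True by auto
  qed
  then show ?thesis by (simp add: Aop_def Let_def)
qed (simp add: Aop_def Let_def)

lemma Atop_zero:
  assumes "1 \<le> i" "i \<le> 3*m1*m2" "1 \<le> j" "j \<le> dbar"
    "\<And>r. r \<in> MCset m1 m2 \<Longrightarrow> r = i \<or> r + 1 = i \<Longrightarrow> y r j = 0"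
  shows "blk dbar (Atop Lf m1 m2 dbar y) i j = 0"
proof -
  define k where "k = (i-1)*dbar + (j-1)"
  have klt: "k < 3*m1*m2*dbar" unfolding k_def using idx_lt assms by simp
  have kd: "k div dbar + 1 = i" "k mod dbar + 1 = j"
    using idx_div[of j dbar i] idx_mod[of j dbar i] assms unfolding k_def by auto
  have "(\<Sum>r\<in>MCset m1 m2. Jmat r (k div dbar + 1) * y r (k mod dbar + 1)) = 0"
  proof (rule sum.neutral, intro ballI)
    fix r assume "r \<in> MCset m1 m2"
    then show "Jmat r (k div dbar + 1) * y r (k mod dbar + 1) = 0"
      using Jmat_nz[of r i] assms(5)[of r] unfolding kd by auto
  qed
  then have "Atop Lf m1 m2 dbar y k = 0" unfolding Atop_def Let_def using klt by simp
  then show ?thesis by (simp add: blk_def k_def)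
qed

lemma Atop_0: "Atop Lf m1 m2 dbar (\<lambda>r j. 0) = (\<lambda>k. 0)"
  by (rule ext) (simp add: Atop_def Let_def)

lemma Mset_range: "a \<in> Mset m1 m2 \<Longrightarrow> m1 \<ge> 1 \<Longrightarrow> 1 \<le> a \<and> a + 1 \<le> 3*m1*m2"
proof -
  assume a: "a \<in> Mset m1 m2" "m1 \<ge> 1"
  then obtain i where i: "a = i*m1" "1 \<le> i" "i \<le> 3*m2 - 1" by (auto simp: Mset_def)
  have "i * m1 \<le> (3*m2 - 1) * m1" using i by (simp add: mult_right_mono)
  then have "i * m1 + 1 \<le> (3*m2 - 1) * m1 + m1" using a(2) by linarith
  also have "\<dots> = 3*m2*m1" using i by (cases m2) (auto simp: algebra_simps)
  finally show ?thesis using i a(2) by (simp add: mult.commute mult.left_commute)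
qed

lemma Mset_sep: "a \<in> Mset m1 m2 \<Longrightarrow> m1 \<ge> 2 \<Longrightarrow> a + 1 \<notin> Mset m1 m2"
proof
  assume a: "a \<in> Mset m1 m2" "m1 \<ge> 2" "a + 1 \<in> Mset m1 m2"
  then obtain i i' where "a = i*m1" "a + 1 = i'*m1" by (auto simp: Mset_def)
  then have "i' * m1 = i * m1 + 1" by simp
  then have "i' > i" by (metis less_add_one mult_less_cancel2 not_less_iff_gr_or_eq)
  then have "Suc i \<le> i'" by simp
  then have "i' * m1 \<ge> Suc i * m1" by (rule mult_le_mono1)
  then show False using \<open>i' * m1 = i * m1 + 1\<close> a(2) by (simp add: algebra_simps)
qed


lemma vnorm_sq: "(vnorm d v)^2 = (\<Sum>k<d. (v k)^2)"
  unfolding vnorm_def by (simp add: sum_nonneg)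

lemma kdecomp:
  assumes "(k::nat) < m * dbar"
  shows "1 \<le> k div dbar + 1" "k div dbar + 1 \<le> m" "1 \<le> k mod dbar + 1" "k mod dbar + 1 \<le> dbar"
    "blk dbar v (k div dbar + 1) (k mod dbar + 1) = v k"
proof -
  have dpos: "dbar > 0" using assms by (cases dbar) auto
  show "1 \<le> k div dbar + 1" "1 \<le> k mod dbar + 1" by simp_all
  show "k div dbar + 1 \<le> m" using assms dpos by (simp add: div_less_iff_less_mult Suc_le_eq)
  show "k mod dbar + 1 \<le> dbar" using dpos by (simp add: Suc_le_eq)
  show "blk dbar v (k div dbar + 1) (k mod dbar + 1) = v k"
    by (simp add: blk_def)
qed

lemma prox_zero:
  assumes prox: "is_prox (3*m1*m2*dbar) eta (gfun beta m1 m2 dbar) xi p" and "eta > 0" "beta \<ge> 0"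
    and m1: "m1 \<ge> 1"
    and clos: "\<And>a j. a \<in> Mset m1 m2 \<Longrightarrow> P a j = P (a+1) j"
    and xz: "\<And>i j. 1 \<le> i \<Longrightarrow> i \<le> 3*m1*m2 \<Longrightarrow> 1 \<le> j \<Longrightarrow> j \<le> dbar \<Longrightarrow> P i j \<Longrightarrow> blk dbar xi i j = 0"
    and ij: "1 \<le> i" "i \<le> 3*m1*m2" "1 \<le> j" "j \<le> dbar" "P i j"
  shows "blk dbar p i j = 0"
proof (rule ccontr)
  assume nz: "blk dbar p i j \<noteq> 0"
  define d where "d = 3*m1*m2*dbar"
  define Q where "Q = (\<lambda>k. k < d \<and> P (k div dbar + 1) (k mod dbar + 1))"
  define y where "y = (\<lambda>k. if Q k then 0 else p k)"
  have pv: "p \<in> vecsp d" and pmin: "\<And>z. z \<in> vecsp d \<Longrightarrow> gfun beta m1 m2 dbar p + (vnorm d (\<lambda>k. p k - xi k))^2 / (2*eta)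
                  \<le> gfun beta m1 m2 dbar z + (vnorm d (\<lambda>k. z k - xi k))^2 / (2*eta)"
    using prox unfolding is_prox_def d_def by auto
  have yv: "y \<in> vecsp d" using pv unfolding vecsp_def y_def Q_def by auto
  have blky: "blk dbar y a j' = (if P a j' then 0 else blk dbar p a j')"
    if "1 \<le> a" "a \<le> 3*m1*m2" "1 \<le> j'" "j' \<le> dbar" for a j'
  proof -
    define k where "k = (a-1)*dbar + (j'-1)"
    have klt: "k < d" unfolding k_def d_def using idx_lt that by simp
    have kd: "k div dbar + 1 = a" "k mod dbar + 1 = j'"
      using idx_div[of j' dbar a] idx_mod[of j' dbar a] that unfolding k_def by auto
    show ?thesis using klt kd unfolding blk_def y_def Q_def k_def[symmetric] by simp
  qed
  have g: "gfun beta m1 m2 dbar y \<le> gfun beta m1 m2 dbar p"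
    unfolding gfun_def
  proof (rule mult_left_mono[OF sum_mono[OF sum_mono]] )
    fix a j' assume a: "a \<in> Mset m1 m2" "j' \<in> {1..dbar}"
    have r: "1 \<le> a" "a + 1 \<le> 3*m1*m2" using Mset_range[OF a(1) m1] by auto
    show "\<bar>blk dbar y a j' - blk dbar y (a + 1) j'\<bar> \<le> \<bar>blk dbar p a j' - blk dbar p (a + 1) j'\<bar>"
      using blky[of a j'] blky[of "a+1" j'] r a(2) clos[OF a(1), of j'] by auto
  qed (fact)
  define k0 where "k0 = (i-1)*dbar + (j-1)"
  have k0lt: "k0 < d" unfolding k0_def d_def using idx_lt ij by simp
  have k0d: "k0 div dbar + 1 = i" "k0 mod dbar + 1 = j"
    using idx_div[of j dbar i] idx_mod[of j dbar i] ij unfolding k0_def by auto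
  have tm: "(y k - xi k)^2 \<le> (p k - xi k)^2" if "k \<in> {..<d}" for k
  proof (cases "Q k")
    case True
    have "xi k = 0" using xz[of "k div dbar + 1" "k mod dbar + 1"] kdecomp(1-4)[of k "3*m1*m2" dbar] kdecomp(5)[of k "3*m1*m2" dbar xi] True
      unfolding Q_def d_def by auto
    then show ?thesis using True by (simp add: y_def)
  qed (simp add: y_def)
  have strict: "(y k0 - xi k0)^2 < (p k0 - xi k0)^2"
  proof -
    have Q0: "Q k0" using k0lt k0d ij unfolding Q_def by simp
    have "xi k0 = 0" using xz[OF ij] by (simp add: blk_def k0_def)
    moreover have "p k0 \<noteq> 0" using nz by (simp add: blk_def k0_def)
    ultimately show ?thesis using Q0 by (simp add: y_def)
  qed
  have "(\<Sum>k<d. (y k - xi k)^2) < (\<Sum>k<d. (p k - xi k)^2)"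
    by (rule sum_strict_mono_ex1) (use tm strict k0lt in auto)
  then have n: "(vnorm d (\<lambda>k. y k - xi k))^2 / (2*eta) < (vnorm d (\<lambda>k. p k - xi k))^2 / (2*eta)"
    unfolding vnorm_sq using assms(2) by (simp add: divide_strict_right_mono)
  from pmin[OF yv] g n show False by linarith
qed


lemma coord_le_vnorm: "k < d \<Longrightarrow> \<bar>x k\<bar> \<le> vnorm d x"
proof -
  assume "k < d"
  then have "(x k)^2 \<le> (\<Sum>k<d. (x k)^2)" by (intro member_le_sum) auto
  then have "sqrt ((x k)^2) \<le> vnorm d x" unfolding vnorm_def by (rule real_sqrt_le_mono)
  then show ?thesis by simp
qed

lemma Aop_bound:
  assumes "vnorm (3*m1*m2*dbar) x \<le> 1"
  shows "\<bar>Aop Lf m1 m2 dbar x r j\<bar> \<le> real (3*m1*m2) * \<bar>Lf\<bar> * real (3*m1*m2)"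
proof (cases "r \<in> MCset m1 m2 \<and> 1 \<le> j \<and> j \<le> dbar")
  case True
  have tb: "\<bar>Jmat r l * blk dbar x l j\<bar> \<le> 1" if "l \<in> {1..3*m1*m2}" for l
  proof -
    have lt: "(l-1)*dbar + (j-1) < 3*m1*m2*dbar" using idx_lt[of l "3*m1*m2" j dbar] that True by simp
    have "\<bar>blk dbar x l j\<bar> \<le> 1" using coord_le_vnorm[OF lt, of x] assms unfolding blk_def by linarith
    moreover have "\<bar>Jmat r l\<bar> \<le> 1" by (simp add: Jmat_def)
    ultimately show ?thesis by (simp add: abs_mult mult_le_one)
  qed
  have "\<bar>\<Sum>l=1..3*m1*m2. Jmat r l * blk dbar x l j\<bar> \<le> (\<Sum>l=1..3*m1*m2. \<bar>Jmat r l * blk dbar x l j\<bar>)"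
    by (rule sum_abs)
  also have "\<dots> \<le> (\<Sum>l=1..3*m1*m2. 1)" by (rule sum_mono) (use tb in auto)
  finally have s: "\<bar>\<Sum>l=1..3*m1*m2. Jmat r l * blk dbar x l j\<bar> \<le> real (3*m1*m2)" by simp
  have "\<bar>Aop Lf m1 m2 dbar x r j\<bar> = real (3*m1*m2) * \<bar>Lf\<bar> * \<bar>\<Sum>l=1..3*m1*m2. Jmat r l * blk dbar x l j\<bar>"
    using True by (simp add: Aop_def Let_def abs_mult)
  also have "\<dots> \<le> real (3*m1*m2) * \<bar>Lf\<bar> * real (3*m1*m2)"
    by (rule mult_left_mono[OF s]) simp
  finally show ?thesis .
qed (auto simp: Aop_def Let_def)

lemma Anorm_nonneg: "0 \<le> Anorm Lf m1 m2 dbar"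
proof -
  define S where "S = {sqrt (\<Sum>r\<in>MCset m1 m2. \<Sum>j=1..dbar. (Aop Lf m1 m2 dbar x r j)^2) | x.
            x \<in> vecsp (3*m1*m2*dbar) \<and> vnorm (3*m1*m2*dbar) x \<le> 1}"
  define B where "B = real (3*m1*m2) * \<bar>Lf\<bar> * real (3*m1*m2)"
  have z: "0 \<in> S"
  proof -
    have "(\<lambda>k. 0::real) \<in> vecsp (3*m1*m2*dbar)" by (simp add: vecsp_def)
    moreover have "vnorm (3*m1*m2*dbar) (\<lambda>k. 0) \<le> 1" by (simp add: vnorm_def)
    moreover have "\<And>r j. Aop Lf m1 m2 dbar (\<lambda>k. 0) r j = 0" by (simp add: Aop_def Let_def blk_def)
    ultimately have "0 = sqrt (\<Sum>r\<in>MCset m1 m2. \<Sum>j=1..dbar. (Aop Lf m1 m2 dbar (\<lambda>k. 0) r j)^2) \<and>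
       (\<lambda>k. 0::real) \<in> vecsp (3*m1*m2*dbar) \<and> vnorm (3*m1*m2*dbar) (\<lambda>k. 0) \<le> 1" by simp
    then show ?thesis unfolding S_def by blast
  qed
  have bdd: "bdd_above S"
  proof (rule bdd_aboveI)
    fix s assume "s \<in> S"
    then obtain x where x: "s = sqrt (\<Sum>r\<in>MCset m1 m2. \<Sum>j=1..dbar. (Aop Lf m1 m2 dbar x r j)^2)"
      "vnorm (3*m1*m2*dbar) x \<le> 1" unfolding S_def by auto
    have "(\<Sum>r\<in>MCset m1 m2. \<Sum>j=1..dbar. (Aop Lf m1 m2 dbar x r j)^2)
        \<le> (\<Sum>r\<in>MCset m1 m2. \<Sum>j=1..dbar. B^2)"
    proof (intro sum_mono)
      fix r j
      have ab: "\<bar>Aop Lf m1 m2 dbar x r j\<bar> \<le> B" using Aop_bound[OF x(2)] unfolding B_def .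
      show "(Aop Lf m1 m2 dbar x r j)^2 \<le> B^2"
        using power_mono[OF ab abs_ge_zero, of 2] by simp
    qed
    then show "s \<le> sqrt (\<Sum>r\<in>MCset m1 m2. \<Sum>j=1..dbar. B^2)"
      unfolding x(1) by (rule real_sqrt_le_mono)
  qed
  show ?thesis using cSup_upper[OF z bdd] unfolding Anorm_def S_def by simp
qed



definition Vf :: "nat \<Rightarrow> nat \<Rightarrow> nat \<Rightarrow> int" where
  "Vf N i j = (int j - 2) * (int N + 1) +
     (if even j then max 0 (int i - int N) else max 0 (2 * int N + 1 - int i))"

lemma Vf_adj: "i' \<le> i + 1 \<Longrightarrow> i \<le> i' + 1 \<Longrightarrow> Vf N i' j \<ge> Vf N i j - 1"
  unfolding Vf_def by auto

lemma Vf_couple: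
  assumes "3 \<le> j" "1 \<le> i" "(i \<le> (3*N) div 3 \<and> even j) \<or> (2*(3*N) div 3 < i \<and> odd j)"
  shows "Vf N i (j-1) \<ge> Vf N i j"
proof -
  have jj: "int (j - 1) = int j - 1" using assms(1) by simp
  have "(i \<le> N \<and> even j) \<or> (2*N < i \<and> odd j)" using assms(3) by simp
  then show ?thesis
  proof
    assume a: "i \<le> N \<and> even j"
    then have "odd (j-1)" using assms(1) by simp
    then show ?thesis unfolding Vf_def jj using a by (auto simp: algebra_simps)
  next
    assume a: "2*N < i \<and> odd j"
    then have "even (j-1)" using assms(1) by simp
    then show ?thesis unfolding Vf_def jj using a by (auto simp: algebra_simps)
  qed
qed

lemma Vf_j2: "i \<le> N \<Longrightarrow> Vf N i 2 = 0"
  unfolding Vf_def by simp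

lemma Vf_lower: "2 \<le> j \<Longrightarrow> Vf N i j \<ge> (int j - 2) * (int N + 1)"
  unfolding Vf_def by auto


lemma span_blk: "in_span x S \<Longrightarrow> (\<forall>v\<in>S. blk dbar v i j = 0) \<Longrightarrow> blk dbar x i j = 0"
  unfolding blk_def by (rule span_zero)

theorem proposition3:
  fixes eps Lf beta :: real and m1 m2 dbar :: nat
    and xs :: "nat \<Rightarrow> nat \<Rightarrow> real"
  assumes "0 < eps" "eps < 1" "0 < Lf"
    and "m1 \<ge> 2" "m2 \<ge> 1" "even (m1 * m2)"
    and "odd dbar" "dbar \<ge> 5"
    and "beta > (50 * pi + 1 + Anorm Lf m1 m2 dbar) * sqrt (real (3*m1*m2)) * eps"
    and "xs 0 = (\<lambda>k. 0)"
    and "\<forall>t\<ge>1. \<exists>eta xi p. eta > 0 \<and>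
           in_span xi (\<Union>s<t. {xs s, grad (3*m1*m2*dbar) (f0 eps Lf (3*m1*m2) dbar) (xs s),
                              Atop Lf m1 m2 dbar (\<lambda>r j. 0),
                              Atop Lf m1 m2 dbar (Aop Lf m1 m2 dbar (xs s))}) \<and>
           is_prox (3*m1*m2*dbar) eta (gfun beta m1 m2 dbar) xi p \<and>
           in_span (xs t) {xi, p}"
  shows "\<forall>jbar\<in>{2..dbar}. \<forall>t. real t \<le> 1 + real (3*m1*m2) * (real jbar - 2) / 6 \<longrightarrow>
           (\<forall>i\<in>{1..3*m1*m2}. supp dbar (blk dbar (xs t) i) \<subseteq> {1..jbar - 1})"
proof -
  define m where "m = 3*m1*m2"
  define N where "N = m1*m2"
  have mN: "m = 3*N" unfolding m_def N_def by simp
  have mdiv: "m div 3 = N" "2*m div 3 = 2*N" unfolding mN by simp_all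
  have beta0: "beta \<ge> 0"
  proof -
    have "0 \<le> (50 * pi + 1 + Anorm Lf m1 m2 dbar) * sqrt (real (3*m1*m2)) * eps"
      using Anorm_nonneg[of Lf m1 m2 dbar] assms(1) pi_gt_zero by (intro mult_nonneg_nonneg) auto
    then show ?thesis using assms(9) by linarith
  qed
  define inv where "inv = (\<lambda>t x. \<forall>i j. 1 \<le> i \<and> i \<le> m \<and> 2 \<le> j \<and> j \<le> dbar \<and> Vf N i j \<ge> 2 * int t - 2
      \<longrightarrow> blk dbar x i j = 0)"
  have INV: "inv t (xs t)" for t
  proof (induction t rule: less_induct)
    case (less t)
    show ?case
    proof (cases "t = 0")
      case True
      then show ?thesis unfolding inv_def using assms(10) by (simp add: blk_def)
    next
      case False
      then have t1: "t \<ge> 1" by simp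
      obtain eta xi p where ep: "eta > 0"
        and xi: "in_span xi (\<Union>s<t. {xs s, grad (3*m1*m2*dbar) (f0 eps Lf (3*m1*m2) dbar) (xs s),
                              Atop Lf m1 m2 dbar (\<lambda>r j. 0),
                              Atop Lf m1 m2 dbar (Aop Lf m1 m2 dbar (xs s))})"
        and pp: "is_prox (3*m1*m2*dbar) eta (gfun beta m1 m2 dbar) xi p"
        and xt: "in_span (xs t) {xi, p}"
        using assms(11) t1 by blast
      have xs_zero: "blk dbar (xs s) i j = 0"
        if "s < t" "1 \<le> i" "i \<le> m" "2 \<le> j" "j \<le> dbar" "Vf N i j \<ge> 2 * int s - 2" for s i j
        using less[OF that(1)] that unfolding inv_def by blast
      have xi_zero: "blk dbar xi i j = 0"
        if ij: "1 \<le> i" "i \<le> m" "2 \<le> j" "j \<le> dbar" "Vf N i j \<ge> 2 * int t - 3" for i j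
      proof (rule span_blk[OF xi], intro ballI)
        fix v assume "v \<in> (\<Union>s<t. {xs s, grad (3*m1*m2*dbar) (f0 eps Lf (3*m1*m2) dbar) (xs s),
                              Atop Lf m1 m2 dbar (\<lambda>r j. 0),
                              Atop Lf m1 m2 dbar (Aop Lf m1 m2 dbar (xs s))})"
        then obtain s where s: "s < t" and v: "v = xs s \<or> v = grad (3*m1*m2*dbar) (f0 eps Lf (3*m1*m2) dbar) (xs s)
           \<or> v = Atop Lf m1 m2 dbar (\<lambda>r j. 0) \<or> v = Atop Lf m1 m2 dbar (Aop Lf m1 m2 dbar (xs s))"
          by blast
        have z0: "blk dbar (xs s) i j = 0" using xs_zero[OF s ij(1-4)] ij(5) s by linarith
        have zgrad: "blk dbar (grad (3*m1*m2*dbar) (f0 eps Lf (3*m1*m2) dbar) (xs s)) i j = 0"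
        proof (rule grad_zero[where m = "3*m1*m2", OF ij(1) _ ij(3,4) assms(7) z0])
          show "i \<le> 3*m1*m2" using ij(2) unfolding m_def .
          assume c: "(i \<le> 3*m1*m2 div 3 \<and> even j) \<or> (2*(3*m1*m2) div 3 < i \<and> odd j)"
          then have c': "(i \<le> (3*N) div 3 \<and> even j) \<or> (2*(3*N) div 3 < i \<and> odd j)"
            unfolding N_def by (simp add: mult.assoc)
          show "blk dbar (xs s) i (j-1) = 0"
          proof (cases "j = 2")
            case True
            then have "i \<le> N" using c' by auto
            then have "Vf N i j = 0" using True Vf_j2 by simp
            then have "t \<le> 1" using ij(5) by linarith
            then have "s = 0" using s by simp
            then show ?thesis using assms(10) by (simp add: blk_def)
          next
            case False
            then have "Vf N i (j-1) \<ge> Vf N i j" using Vf_couple[OF _ ij(1) c'] ij(3) by simp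
            then show ?thesis using xs_zero[OF s ij(1,2), of "j-1"] ij False s by simp
          qed
        qed
        have zA: "blk dbar (Atop Lf m1 m2 dbar (Aop Lf m1 m2 dbar (xs s))) i j = 0"
        proof (rule Atop_zero)
          show "1 \<le> i" "i \<le> 3*m1*m2" "1 \<le> j" "j \<le> dbar" using ij unfolding m_def by auto
          fix r assume r: "r \<in> MCset m1 m2" "r = i \<or> r + 1 = i"
          have rr: "1 \<le> r" "r + 1 \<le> m" using MCset_range[OF r(1)] unfolding m_def by auto
          show "Aop Lf m1 m2 dbar (xs s) r j = 0"
          proof (rule Aop_zero, rule conjI)
            have "Vf N r j \<ge> Vf N i j - 1" using Vf_adj[of r i] r(2) by auto
            then show "blk dbar (xs s) r j = 0" using xs_zero[OF s rr(1) _ ij(3,4)] rr ij(5) s by simp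
            have "Vf N (r+1) j \<ge> Vf N i j - 1" using Vf_adj[of "r+1" i] r(2) by auto
            then show "blk dbar (xs s) (r+1) j = 0" using xs_zero[OF s _ rr(2) ij(3,4)] ij(5) s by simp
          qed
        qed
        show "blk dbar v i j = 0" using v z0 zgrad zA by (auto simp: Atop_0 blk_def)
      qed
      define G where "G = (\<lambda>a. if a - 1 \<in> Mset m1 m2 then a - 1 else a)"
      define P where "P = (\<lambda>a j. 2 \<le> j \<and> j \<le> dbar \<and> min (Vf N (G a) j) (Vf N (G a + 1) j) \<ge> 2 * int t - 3)"
      have m1: "m1 \<ge> 1" using assms(4) by simp
      have Gi: "G a = a \<or> (G a = a - 1 \<and> a \<ge> 2)" if "a \<ge> 1" for a
      proof -
        have "0 \<notin> Mset m1 m2" using assms(4) by (auto simp: Mset_def)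
        then show ?thesis unfolding G_def using that by (cases "a = 1") auto
      qed
      have p_zero: "blk dbar p i j = 0"
        if ij: "1 \<le> i" "i \<le> m" "2 \<le> j" "j \<le> dbar" "Vf N i j \<ge> 2 * int t - 2" for i j
      proof (rule prox_zero[OF pp ep beta0 m1, where P = P])
        fix a j' assume a: "a \<in> Mset m1 m2"
        have a1: "1 \<le> a" using Mset_range[OF a m1] by simp
        have "a - 1 \<notin> Mset m1 m2"
        proof
          assume "a - 1 \<in> Mset m1 m2"
          from Mset_sep[OF this assms(4)] a a1 show False by simp
        qed
        then have "G a = a" "G (a+1) = a" using a unfolding G_def by auto
        then show "P a j' = P (a+1) j'" unfolding P_def by simp
      next
        fix i' j' assume h: "1 \<le> i'" "i' \<le> 3*m1*m2" "1 \<le> j'" "j' \<le> dbar" "P i' j'"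
        have "Vf N i' j' \<ge> 2 * int t - 3" using h(5) Gi[OF h(1)] unfolding P_def by auto
        then show "blk dbar xi i' j' = 0" using xi_zero[of i' j'] h unfolding P_def m_def by auto
      next
        show "1 \<le> i" "i \<le> 3*m1*m2" "1 \<le> j" "j \<le> dbar" using ij unfolding m_def by auto
        have "Vf N (G i) j \<ge> Vf N i j - 1" using Vf_adj[of "G i" i] Gi[OF ij(1)] by auto
        moreover have "Vf N (G i + 1) j \<ge> Vf N i j - 1" using Vf_adj[of "G i + 1" i] Gi[OF ij(1)] by auto
        ultimately show "P i j" unfolding P_def using ij by auto
      qed
      show ?thesis unfolding inv_def
      proof (intro allI impI)
        fix i j assume h: "1 \<le> i \<and> i \<le> m \<and> 2 \<le> j \<and> j \<le> dbar \<and> 2 * int t - 2 \<le> Vf N i j"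
        show "blk dbar (xs t) i j = 0"
        proof (rule span_blk[OF xt], intro ballI)
          fix v assume "v \<in> {xi, p}"
          then show "blk dbar v i j = 0" using xi_zero[of i j] p_zero[of i j] h by auto
        qed
      qed
    qed
  qed
  show ?thesis
  proof (intro ballI allI impI subsetI)
    fix jbar t i j
    assume jb: "jbar \<in> {2..dbar}" and tb: "real t \<le> 1 + real (3*m1*m2) * (real jbar - 2) / 6"
      and i: "i \<in> {1..3*m1*m2}" and j: "j \<in> supp dbar (blk dbar (xs t) i)"
    have j1: "1 \<le> j" "j \<le> dbar" "blk dbar (xs t) i j \<noteq> 0" using j unfolding supp_def by auto
    show "j \<in> {1..jbar - 1}"
    proof (rule ccontr)
      assume "j \<notin> {1..jbar - 1}"
      then have jj: "j \<ge> jbar" using j1 by auto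
      have "real t \<le> 1 + real N * (real jbar - 2) / 2" using tb unfolding N_def by simp
      then have "2 * real t - 2 \<le> real N * (real jbar - 2)" by (simp add: field_simps)
      also have "\<dots> \<le> real N * (real j - 2)" using jj by (intro mult_left_mono) auto
      also have "\<dots> \<le> (real j - 2) * (real N + 1)" using jj jb by (simp add: algebra_simps)
      finally have "2 * real t - 2 \<le> (real j - 2) * (real N + 1)" .
      then have "real_of_int (2 * int t - 2) \<le> real_of_int ((int j - 2) * (int N + 1))" by simp
      then have "2 * int t - 2 \<le> (int j - 2) * (int N + 1)" by linarith
      then have "2 * int t - 2 \<le> Vf N i j" using Vf_lower[of j N i] jj jb by auto
      then have "blk dbar (xs t) i j = 0" using INV[of t] i j1 jj jb unfolding inv_def m_def by auto
      then show False using j1 by simp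
    qed
  qed
qed

end
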